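(* Let $X$ be a normal $k$-space which contains a closed subspace homeomorphic to $K$ and a closed subspace homeomorphic to $V$. Then: (a) $X$ is not homeomorphic to any closed multiplicative subset of a topological group; (b) $X$ is not homeomorphic to any closed convex subset of a (real) linear topological space.
   Context: $K=\{(0,0)\}\cup\{(\tfrac1n,\tfrac1{nm}) : n,m\in\mathbb N\}\subset\mathbb R^2$ with the subspace topology. Let $S_0=\{0\}\cup\{\tfrac1n:n\in\mathbb N\}\subset\mathbb R$ and let $V$ (the Fréchet–Urysohn fan) be the quotient space $(\mathbb N\times S_0)/(\mathbb N\times\{0\})$, where $\mathbb N$ is discrete, i.e. $\mathbb N\times S_0$ with the subset $\mathbb N\times\{0\}$ collapsed to a single point. A subset $A$ of a topological group $G$ is multiplicative if $a\ast b\in A$ for all $a,b\in A$, where $\ast$ is the group operation. A $k$-space is a space in which a set is closed iff its intersection with every compact subset $C$ is closed in $C$. *)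

theory Defs
  imports "HOL-Analysis.Analysis" "HOL-Algebra.Group"
begin

definition K_set :: "(real \<times> real) set" where
  "K_set = {(0,0)} \<union> {(1 / real n, 1 / (real n * real m)) | n m. n \<ge> 1 \<and> m \<ge> 1}"

definition K_space :: "(real \<times> real) topology" where
  "K_space = subtopology euclidean K_set"

definition S0 :: "real set" where
  "S0 = {0} \<union> {1 / real n | n. n \<ge> 1}"

definition quotient_topology :: "'a topology \<Rightarrow> ('a \<Rightarrow> 'b) \<Rightarrow> 'b topology" where
  "quotient_topology P f =
     topology (\<lambda>U. U \<subseteq> f ` topspace P \<and> openin P {x \<in> topspace P. f x \<in> U})"


lemma istopology_quotient_topology:
  "istopology (\<lambda>U. U \<subseteq> f ` topspace P \<and> openin P {x \<in> topspace P. f x \<in> U})"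
proof -
  have i: "{x \<in> topspace P. f x \<in> S \<inter> T} = {x \<in> topspace P. f x \<in> S} \<inter> {x \<in> topspace P. f x \<in> T}" for S T by blast
  have u: "{x \<in> topspace P. f x \<in> \<Union>K} = \<Union>((\<lambda>U. {x \<in> topspace P. f x \<in> U}) ` K)" for K by blast
  have a: "S \<inter> T \<subseteq> f ` topspace P \<and> openin P {x \<in> topspace P. f x \<in> S \<inter> T}"
    if "S \<subseteq> f ` topspace P \<and> openin P {x \<in> topspace P. f x \<in> S}"
      "T \<subseteq> f ` topspace P \<and> openin P {x \<in> topspace P. f x \<in> T}" for S T
    using that by (auto simp only: i intro: openin_Int)
  have b: "\<Union>K \<subseteq> f ` topspace P \<and> openin P {x \<in> topspace P. f x \<in> \<Union>K}"
    if "\<forall>U\<in>K. U \<subseteq> f ` topspace P \<and> openin P {x \<in> topspace P. f x \<in> U}" for K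
    using that unfolding u by (auto intro!: openin_Union)
  show ?thesis unfolding istopology_def using a b by blast
qed

lemma openin_quotient_topology:
  "openin (quotient_topology P f) U \<longleftrightarrow> U \<subseteq> f ` topspace P \<and> openin P {x \<in> topspace P. f x \<in> U}"
  unfolding quotient_topology_def using istopology_quotient_topology[of f P]
  by (simp add: topology_inverse')

definition fan_base :: "(nat \<times> real) topology" where
  "fan_base = prod_topology (discrete_topology {n. n \<ge> 1}) (subtopology euclideanreal S0)"

text \<open>Collapsing map: all points (n,0) go to the single point (0,0); others are fixed
  (note (0,0) is not in N x S0 since N starts at 1).\<close>
definition fan_collapse :: "nat \<times> real \<Rightarrow> nat \<times> real" where
  "fan_collapse p = (if snd p = 0 then (0, 0) else p)"

definition fan_V :: "(nat \<times> real) topology" where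
  "fan_V = quotient_topology fan_base fan_collapse"

definition topological_group :: "('g, 'm) monoid_scheme \<Rightarrow> 'g topology \<Rightarrow> bool" where
  "topological_group G T \<longleftrightarrow>
     group G \<and> topspace T = carrier G \<and>
     continuous_map (prod_topology T T) T (\<lambda>p. fst p \<otimes>\<^bsub>G\<^esub> snd p) \<and>
     continuous_map T T (\<lambda>x. inv\<^bsub>G\<^esub> x)"

definition multiplicative :: "('g, 'm) monoid_scheme \<Rightarrow> 'g set \<Rightarrow> bool" where
  "multiplicative G A \<longleftrightarrow> A \<subseteq> carrier G \<and> (\<forall>a\<in>A. \<forall>b\<in>A. a \<otimes>\<^bsub>G\<^esub> b \<in> A)"

definition linear_topological_space :: "'v::real_vector topology \<Rightarrow> bool" where
  "linear_topological_space T \<longleftrightarrow>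
     topspace T = UNIV \<and>
     continuous_map (prod_topology T T) T (\<lambda>p. fst p + snd p) \<and>
     continuous_map (prod_topology euclideanreal T) T (\<lambda>p. fst p *\<^sub>R snd p)"

end

theory Submission
  imports Defs
begin



lemma cpt_conv:
  assumes a: "a \<in> topspace T" and F: "F \<subseteq> topspace T"
    and fin: "\<And>W. openin T W \<Longrightarrow> a \<in> W \<Longrightarrow> finite (F - W)"
  shows "compactin T (insert a F)"
  unfolding compactin_def
proof (intro conjI allI impI)
  show "insert a F \<subseteq> topspace T" using a F by auto
  fix U assume U: "Ball U (openin T) \<and> insert a F \<subseteq> \<Union> U"
  then obtain W where W: "W \<in> U" "a \<in> W" by auto
  have "\<forall>x\<in>F - W. \<exists>V\<in>U. x \<in> V" using U by auto
  then obtain g where g: "\<forall>x\<in>F - W. g x \<in> U \<and> x \<in> g x" by metis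
  show "\<exists>F'. finite F' \<and> F' \<subseteq> U \<and> insert a F \<subseteq> \<Union> F'"
    apply (rule exI[of _ "insert W (g ` (F - W))"])
    using fin[of W] U W g by auto
qed

lemma cpt_disc_finite:
  assumes "compactin X S" and "\<And>x. x \<in> S \<Longrightarrow> openin X {x}"
  shows "finite S"
proof -
  have "Ball ((\<lambda>x. {x}) ` S) (openin X) \<and> S \<subseteq> \<Union> ((\<lambda>x. {x}) ` S)" using assms(2) by auto
  then obtain F where F: "finite F" "F \<subseteq> (\<lambda>x. {x}) ` S" "S \<subseteq> \<Union>F"
    using assms(1) unfolding compactin_def by metis
  have "finite (\<Union>F)" using F by (auto intro: finite_subset)
  then show ?thesis using F(3) finite_subset by blast
qed

lemma core:
  fixes T :: "'g topology" and mu :: "'g \<Rightarrow> 'g \<Rightarrow> 'g" and k v :: "nat \<Rightarrow> nat \<Rightarrow> 'g"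
  assumes kY: "k_space (subtopology T A)" and t1: "t1_space (subtopology T A)"
   and Atop: "A \<subseteq> topspace T"
   and mu: "continuous_map (prod_topology T T) T (\<lambda>p. mu (fst p) (snd p))"
   and muA: "\<And>x y. x\<in>A \<Longrightarrow> y\<in>A \<Longrightarrow> mu x y \<in> A"
   and L: "continuous_map (prod_topology T T) T L"
   and R: "continuous_map (prod_topology T T) T R"
   and LR: "\<And>x y. x \<in> A \<Longrightarrow> y \<in> A \<Longrightarrow> L (mu x y, y) = x \<and> R (x, mu x y) = y"
   and aA: "a \<in> A" and kA: "\<And>n m. n\<ge>1 \<Longrightarrow> m\<ge>1 \<Longrightarrow> k n m \<in> A"
   and bA: "b \<in> A" and vA: "\<And>n m. n\<ge>1 \<Longrightarrow> m\<ge>1 \<Longrightarrow> v n m \<in> A"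
   and Knb: "\<And>W. openin T W \<Longrightarrow> a \<in> W \<Longrightarrow> \<exists>N. \<forall>n\<ge>N. \<forall>m\<ge>1. k n m \<in> W"
   and Kcpt: "\<And>n C. n \<ge> 1 \<Longrightarrow> compactin T C \<Longrightarrow> finite {m. m\<ge>1 \<and> k n m \<in> C}"
   and Vnb: "\<And>W n. openin T W \<Longrightarrow> b \<in> W \<Longrightarrow> n\<ge>1 \<Longrightarrow> \<exists>M. \<forall>m\<ge>M. v n m \<in> W"
   and Vcpt: "\<And>C. compactin T C \<Longrightarrow> finite {n. n\<ge>1 \<and> (\<exists>m\<ge>1. v n m \<in> C)}"
  shows False
proof -
  define p where "p n m = mu (k n m) (v n m)" for n m
  have pA: "p n m \<in> A" if "n\<ge>1" "m\<ge>1" for n m using that kA vA muA p_def by auto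
  have fin: "finite {(n,m). n\<ge>1 \<and> m\<ge>1 \<and> p n m \<in> C}" if C: "compactin T C" for C
  proof (rule ccontr)
    define S where "S = {(n,m). n\<ge>1 \<and> m\<ge>1 \<and> p n m \<in> C}"
    assume inf: "infinite {(n,m). n\<ge>1 \<and> m\<ge>1 \<and> p n m \<in> C}"
    hence infS: "infinite S" unfolding S_def .
    show False
    proof (cases "finite (fst ` S)")
      case True
      have "S \<subseteq> (\<Union>n\<in>fst ` S. Pair n ` {m. (n,m)\<in>S})" by force
      then obtain n0 where n0: "n0 \<in> fst ` S" "infinite {m. (n0,m)\<in>S}"
      proof -
        have "\<not> (\<forall>n\<in>fst ` S. finite {m. (n,m)\<in>S})"
        proof
          assume "\<forall>n\<in>fst ` S. finite {m. (n,m)\<in>S}"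
          hence "finite (\<Union>n\<in>fst ` S. Pair n ` {m. (n,m)\<in>S})" using True by blast
          thus False using infS finite_subset \<open>S \<subseteq> _\<close> by blast
        qed
        thus ?thesis using that by blast
      qed
      have n01: "n0 \<ge> 1" using n0(1) S_def by auto
      define Q where "Q = insert b {v n0 m | m. m\<ge>1}"
      have Q: "compactin T Q" unfolding Q_def
      proof (rule cpt_conv)
        show "b \<in> topspace T" using bA Atop by auto
        show "{v n0 m |m. 1 \<le> m} \<subseteq> topspace T" using vA n01 Atop by auto
        fix W assume "openin T W" "b \<in> W"
        then obtain M where M: "\<forall>m\<ge>M. v n0 m \<in> W" using Vnb n01 by blast
        have "{v n0 m |m. 1 \<le> m} - W \<subseteq> v n0 ` {..<M}"
        proof clarify
          fix m assume "v n0 m \<notin> W"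
          hence "m < M" using M not_le by blast
          thus "v n0 m \<in> v n0 ` {..<M}" by blast
        qed
        then show "finite ({v n0 m |m. 1 \<le> m} - W)" using finite_subset by blast
      qed
      have Cx: "compactin T (L ` (C \<times> Q))"
        by (rule image_compactin[OF _ L]) (simp add: compactin_Times C Q)
      have "{m. (n0,m)\<in>S} \<subseteq> {m. m\<ge>1 \<and> k n0 m \<in> L ` (C \<times> Q)}"
      proof clarify
        fix m assume "(n0,m) \<in> S"
        hence m: "m \<ge> 1" "p n0 m \<in> C" using S_def by auto
        have "k n0 m = L (p n0 m, v n0 m)" using LR kA vA n01 m p_def by auto
        moreover have "v n0 m \<in> Q" using Q_def m by auto
        ultimately show "1 \<le> m \<and> k n0 m \<in> L ` (C \<times> Q)" using m by auto
      qed
      then show False using Kcpt[OF n01 Cx] n0(2) finite_subset by blast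
    next
      case False
      define Fn where "Fn = fst ` S"
      have "\<forall>n\<in>Fn. \<exists>m. (n,m) \<in> S" unfolding Fn_def by force
      then obtain g where g: "\<forall>n\<in>Fn. (n, g n) \<in> S" by metis
      have g1: "n \<ge> 1" "g n \<ge> 1" "p n (g n) \<in> C" if "n \<in> Fn" for n using g that S_def by auto
      define Q where "Q = insert a ((\<lambda>n. k n (g n)) ` Fn)"
      have Q: "compactin T Q" unfolding Q_def
      proof (rule cpt_conv)
        show "a \<in> topspace T" using aA Atop by auto
        show "(\<lambda>n. k n (g n)) ` Fn \<subseteq> topspace T" using kA g1 Atop by auto
        fix W assume "openin T W" "a \<in> W"
        then obtain N where N: "\<forall>n\<ge>N. \<forall>m\<ge>1. k n m \<in> W" using Knb by blast
        have "(\<lambda>n. k n (g n)) ` Fn - W \<subseteq> (\<lambda>n. k n (g n)) ` {..<N}"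
        proof clarify
          fix n assume n: "n \<in> Fn" "k n (g n) \<notin> W"
          hence "n < N" using N g1(2)[OF n(1)] not_le by blast
          thus "k n (g n) \<in> (\<lambda>n. k n (g n)) ` {..<N}" by blast
        qed
        then show "finite ((\<lambda>n. k n (g n)) ` Fn - W)" using finite_subset by blast
      qed
      have Cy: "compactin T (R ` (Q \<times> C))"
        by (rule image_compactin[OF _ R]) (simp add: compactin_Times C Q)
      have "Fn \<subseteq> {n. n\<ge>1 \<and> (\<exists>m\<ge>1. v n m \<in> R ` (Q \<times> C))}"
      proof clarify
        fix n assume n: "n \<in> Fn"
        have "v n (g n) = R (k n (g n), p n (g n))" using LR kA vA g1[OF n] p_def by auto
        moreover have "k n (g n) \<in> Q" using Q_def n by auto
        ultimately show "1 \<le> n \<and> (\<exists>m\<ge>1. v n m \<in> R ` (Q \<times> C))" using g1[OF n] by blast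
      qed
      then show False using Vcpt[OF Cy] False Fn_def finite_subset by blast
    qed
  qed
  define c where "c = mu a b"
  have cA: "c \<in> A" using muA aA bA c_def by auto
  define D where "D = {p n m | n m. n\<ge>1 \<and> m\<ge>1} - {c}"
  have DA: "D \<subseteq> A" using pA D_def by auto
  have tY: "topspace (subtopology T A) = A" using Atop by auto
  have clD: "closedin (subtopology T A) D"
  proof (rule kY[unfolded k_space, rule_format], intro conjI allI impI)
    show "D \<subseteq> topspace (subtopology T A)" using DA tY by auto
    fix K assume K: "compactin (subtopology T A) K"
    hence KT: "compactin T K" "K \<subseteq> A" by (auto simp: compactin_subtopology)
    have "K \<inter> D \<subseteq> (\<lambda>(n,m). p n m) ` {(n,m). n\<ge>1 \<and> m\<ge>1 \<and> p n m \<in> K}"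
    proof
      fix x assume "x \<in> K \<inter> D"
      then obtain n m where "n\<ge>1" "m\<ge>1" "x = p n m" "x \<in> K" unfolding D_def by blast
      thus "x \<in> (\<lambda>(n,m). p n m) ` {(n,m). n\<ge>1 \<and> m\<ge>1 \<and> p n m \<in> K}" by force
    qed
    hence "finite (K \<inter> D)" using fin[OF KT(1)] finite_subset by blast
    moreover have "t1_space (subtopology (subtopology T A) K)" using t1 t1_space_subtopology by blast
    moreover have "K \<inter> D \<subseteq> topspace (subtopology (subtopology T A) K)" using KT tY by auto
    ultimately show "closedin (subtopology (subtopology T A) K) (K \<inter> D)"
      using t1_space_closedin_finite by blast
  qed
  hence "openin (subtopology T A) (A - D)"
    using openin_diff[OF openin_topspace clD] tY by simp
  then obtain W where W: "openin T W" "A - D = W \<inter> A" by (auto simp: openin_subtopology)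
  have cnD: "c \<notin> D" using D_def by auto
  have cW: "c \<in> W" using W cA cnD by auto
  have "openin (prod_topology T T) {x \<in> topspace (prod_topology T T). mu (fst x) (snd x) \<in> W}"
    using mu W(1) by (rule openin_continuous_map_preimage)
  moreover have "(a,b) \<in> {x \<in> topspace (prod_topology T T). mu (fst x) (snd x) \<in> W}"
    using aA bA Atop cW c_def by (simp add: subset_iff)
  ultimately obtain U U' where UU: "openin T U" "openin T U'" "a \<in> U" "b \<in> U'"
      "U \<times> U' \<subseteq> {x \<in> topspace (prod_topology T T). mu (fst x) (snd x) \<in> W}"
    unfolding openin_prod_topology_alt by meson
  obtain N where N: "\<forall>n\<ge>N. \<forall>m\<ge>1. k n m \<in> U" using Knb UU by blast
  define n0 where "n0 = max N 1"
  obtain M where M: "\<forall>m\<ge>M. v n0 m \<in> U'" using Vnb[OF UU(2) UU(4), of n0] n0_def by auto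
  have n01: "n0 \<ge> 1" unfolding n0_def by simp
  have "Pair n0 ` {max M 1..} \<subseteq> {(n,m). n\<ge>1 \<and> m\<ge>1 \<and> p n m \<in> {c}}"
  proof (rule image_subsetI)
    fix m assume m: "m \<in> {max M 1..}"
    have m1: "m \<ge> 1" "m \<ge> M" using m by auto
    have "k n0 m \<in> U" using N m1 n0_def by simp
    moreover have "v n0 m \<in> U'" using M m1 by simp
    ultimately have "(k n0 m, v n0 m) \<in> U \<times> U'" by simp
    hence "(k n0 m, v n0 m) \<in> {x \<in> topspace (prod_topology T T). mu (fst x) (snd x) \<in> W}" using UU(5) by blast
    hence "p n0 m \<in> W" unfolding p_def by simp
    moreover have "p n0 m \<in> A" using pA m1 n01 by blast
    ultimately have "p n0 m \<notin> D" using W(2) by blast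
    moreover have "p n0 m \<in> {p n m | n m. n\<ge>1 \<and> m\<ge>1}" using m1 n01 by blast
    ultimately have "p n0 m = c" unfolding D_def by blast
    then show "(n0, m) \<in> {(n,m). n\<ge>1 \<and> m\<ge>1 \<and> p n m \<in> {c}}" using m1 n01 by simp
  qed
  moreover have "infinite (Pair n0 ` {max M 1..})"
    by (simp add: finite_image_iff inj_on_def infinite_Ici)
  moreover have "compactin T {c}" using cA Atop by auto
  ultimately show False using fin finite_subset by blast
qed




lemma embed:
  assumes hX: "X homeomorphic_space subtopology T A" and clA: "closedin T A"
    and C: "closedin X C" and hC: "subtopology X C homeomorphic_space Z"
  shows "\<exists>e K2. homeomorphic_map Z (subtopology T K2) e \<and> closedin T K2 \<and> K2 \<subseteq> A"
proof -
  obtain f where f: "homeomorphic_map X (subtopology T A) f" using hX homeomorphic_space by blast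
  obtain h where h: "homeomorphic_map Z (subtopology X C) h"
    using hC homeomorphic_space homeomorphic_space_sym by blast
  have Ctop: "C \<subseteq> topspace X" using C closedin_subset by blast
  have sur: "f ` topspace X = topspace (subtopology T A)"
    using f homeomorphic_imp_surjective_map by blast
  have "f ` (topspace X \<inter> C) = topspace (subtopology T A) \<inter> f ` C" using sur Ctop by auto
  hence f2: "homeomorphic_map (subtopology X C) (subtopology (subtopology T A) (f ` C)) f"
    using f homeomorphic_map_subtopologies by blast
  have fCA: "f ` C \<subseteq> A" using sur Ctop by auto
  have eqs: "subtopology (subtopology T A) (f ` C) = subtopology T (f ` C)"
    using fCA by (simp add: subtopology_subtopology Int_absorb1)
  have "homeomorphic_map Z (subtopology T (f ` C)) (f \<circ> h)"
    using homeomorphic_map_compose[OF h f2] eqs by simp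
  moreover have "closedin (subtopology T A) (f ` C)"
    using homeomorphic_map_closedness[OF f Ctop] C by blast
  hence "closedin T (f ` C)" using clA closedin_trans_full by blast
  ultimately show ?thesis using fCA by blast
qed

lemma K_props:
  assumes e: "homeomorphic_map K_space (subtopology T K2) e" and cl: "closedin T K2"
  shows "e (0,0) \<in> K2" "\<And>n m. n\<ge>1 \<Longrightarrow> m\<ge>1 \<Longrightarrow> e (1/real n, 1/(real n * real m)) \<in> K2"
    "\<And>W. openin T W \<Longrightarrow> e (0,0) \<in> W \<Longrightarrow> \<exists>N. \<forall>n\<ge>N. \<forall>m\<ge>1. e (1/real n, 1/(real n * real m)) \<in> W"
    "\<And>n C. n \<ge> 1 \<Longrightarrow> compactin T C \<Longrightarrow> finite {m. m\<ge>1 \<and> e (1/real n, 1/(real n * real m)) \<in> C}"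
proof -
  have tK: "topspace K_space = K_set" by (simp add: K_space_def)
  have sur: "e ` K_set = topspace T \<inter> K2"
    using homeomorphic_imp_surjective_map[OF e] tK by simp
  have pts: "(1/real n, 1/(real n * real m)) \<in> K_set" if "n\<ge>1" "m\<ge>1" for n m
    using that unfolding K_set_def by blast
  have p0: "(0,0) \<in> K_set" unfolding K_set_def by blast
  show "e (0,0) \<in> K2" using sur p0 by blast
  show "\<And>n m. n\<ge>1 \<Longrightarrow> m\<ge>1 \<Longrightarrow> e (1/real n, 1/(real n * real m)) \<in> K2"
    using sur pts by blast
  have cont: "continuous_map K_space T e"
    using homeomorphic_imp_continuous_map[OF e] continuous_map_in_subtopology by blast
  show "\<exists>N. \<forall>n\<ge>N. \<forall>m\<ge>1. e (1/real n, 1/(real n * real m)) \<in> W" if W: "openin T W" "e (0,0) \<in> W" for W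
  proof -
    have "openin K_space {x \<in> topspace K_space. e x \<in> W}"
      using cont W(1) by (rule openin_continuous_map_preimage)
    then obtain Op where Op: "open Op" "{x \<in> K_set. e x \<in> W} = Op \<inter> K_set"
      unfolding K_space_def by (auto simp: openin_subtopology)
    have "(0,0) \<in> Op" using Op(2) p0 W(2) by blast
    then obtain eps where eps: "eps > 0" "ball (0,0) eps \<subseteq> Op" using Op(1) open_contains_ball by blast
    obtain N0::nat where N0: "2 / eps < real N0" using reals_Archimedean2 by blast
    define N where "N = max N0 1"
    have N: "N \<ge> 1" "2/eps < real N" unfolding N_def using N0 by auto
    have "e (1/real n, 1/(real n * real m)) \<in> W" if nm: "n \<ge> N" "m \<ge> 1" for n m
    proof -
      have n1: "real n \<ge> 1" "real m \<ge> 1" using nm N by auto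
      have "norm (1/real n, 1/(real n * real m)) \<le> norm (1/real n) + norm (1/(real n * real m))"
        by (rule norm_Pair_le)
      also have "\<dots> \<le> 2 / real n" using n1 by (simp add: field_simps)
      also have "\<dots> < eps"
      proof -
        have "2 / eps < real n" using N nm by linarith
        thus ?thesis using eps(1) n1 by (simp add: field_simps)
      qed
      finally have "(1/real n, 1/(real n * real m)) \<in> ball (0,0) eps" by (simp add: dist_norm norm_Pair)
      hence "(1/real n, 1/(real n * real m)) \<in> Op \<inter> K_set" using eps pts nm N by auto
      thus ?thesis using Op(2) by blast
    qed
    thus ?thesis by blast
  qed
  show "finite {m. m\<ge>1 \<and> e (1/real n, 1/(real n * real m)) \<in> C}" if n: "n \<ge> 1" and C: "compactin T C" for n C
  proof -
    have "compactin T (K2 \<inter> C)" using closed_Int_compactin cl C by blast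
    hence c2: "compactin (subtopology T K2) (K2 \<inter> C)" by (simp add: compactin_subtopology)
    define Z where "Z = {z \<in> K_set. e z \<in> C}"
    have "e ` Z = K2 \<inter> C" using sur compactin_subset_topspace[OF C] unfolding Z_def by auto
    hence "compactin K_space Z" using homeomorphic_map_compactness[OF e, of Z] c2 tK Z_def by auto
    hence cZ: "compact Z" by (simp add: K_space_def compactin_subtopology)
    define Y where "Y = snd ` (Z \<inter> {z. fst z = 1/real n})"
    have "closed {z::real\<times>real. fst z = 1/real n}" by (intro closed_Collect_eq continuous_intros)
    hence "compact (Z \<inter> {z. fst z = 1/real n})" using cZ by blast
    hence cY: "compact Y" unfolding Y_def by (intro compact_continuous_image continuous_intros)
    have Ypos: "y > 0" if yY: "y \<in> Y" for y
    proof -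
      obtain z where z: "z \<in> K_set" "fst z = 1/real n" "y = snd z" using yY unfolding Y_def Z_def by auto
      have "z \<noteq> (0,0)" using z n by auto
      then obtain a b where "z = (1 / real a, 1 / (real a * real b))" "a \<ge> 1" "b \<ge> 1"
        using z(1) unfolding K_set_def by blast
      thus ?thesis using z by simp
    qed
    show ?thesis
    proof (cases "Y = {}")
      case True
      have "{m. m\<ge>1 \<and> e (1/real n, 1/(real n * real m)) \<in> C} = {}"
        using True pts n unfolding Y_def Z_def by fastforce
      thus ?thesis by (metis finite.emptyI)
    next
      case False
      then obtain y0 where y0: "y0 \<in> Y" "\<forall>y\<in>Y. y0 \<le> y" using compact_attains_inf[OF cY] by blast
      have y0p: "y0 > 0" using Ypos y0 by blast
      have "{m. m\<ge>1 \<and> e (1/real n, 1/(real n * real m)) \<in> C} \<subseteq> {..nat \<lceil>1/y0\<rceil>}"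
      proof
        fix m assume mm: "m \<in> {m. m\<ge>1 \<and> e (1/real n, 1/(real n * real m)) \<in> C}"
        hence m: "m \<ge> 1" "e (1/real n, 1/(real n * real m)) \<in> C" by auto
        have "1/(real n * real m) \<in> Y" using m pts[OF n m(1)] unfolding Y_def Z_def by force
        hence le: "y0 \<le> 1/(real n * real m)" using y0 by blast
        have nm0: "real n * real m > 0" using n m by simp
        have "y0 * (real n * real m) \<le> 1" using le nm0 by (simp add: pos_le_divide_eq)
        moreover have "real m \<le> real n * real m" using n by (simp add: mult_le_cancel_right1)
        hence "y0 * real m \<le> y0 * (real n * real m)" using y0p by (intro mult_left_mono) auto
        ultimately have "y0 * real m \<le> 1" by linarith
        hence "real m \<le> 1/y0" using y0p by (simp add: pos_le_divide_eq mult.commute)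
        also have "\<dots> \<le> real (nat \<lceil>1/y0\<rceil>)" by (rule real_nat_ceiling_ge)
        finally have "real m \<le> real (nat \<lceil>1/y0\<rceil>)" .
        thus "m \<in> {..nat \<lceil>1/y0\<rceil>}" by simp
      qed
      thus ?thesis using finite_subset by blast
    qed
  qed
qed




lemma gap_aux:
  fixes a b :: real assumes a: "a \<ge> 1" and b: "b \<ge> a + 1"
  shows "1/(a+1)^2 \<le> 1/a - 1/b"
proof -
  have "1/b \<le> 1/(a+1)" using a b by (intro divide_left_mono) auto
  moreover have "1/a - 1/(a+1) = 1/(a*(a+1))" using a by (simp add: field_simps)
  moreover have "1/(a+1)^2 \<le> 1/(a*(a+1))"
  proof (rule divide_left_mono)
    show "a*(a+1) \<le> (a+1)^2" using a by (simp add: power2_eq_square mult_right_mono)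
    show "0 < (a+1)^2 * (a*(a+1))" using a by simp
  qed simp
  ultimately show ?thesis by linarith
qed

lemma gap:
  fixes k m :: nat assumes "k \<ge> 1" "m \<ge> 1" "k \<noteq> m"
  shows "1/(real m+1)^2 \<le> \<bar>1/real m - 1/real k\<bar>"
proof (cases "k > m")
  case True
  hence "real k \<ge> real m + 1" by linarith
  thus ?thesis using gap_aux[of "real m" "real k"] assms by simp
next
  case False
  hence "k < m" using assms by simp
  hence km: "real m \<ge> real k + 1" by linarith
  have "1/(real k+1)^2 \<le> 1/real k - 1/real m" using gap_aux[OF _ km] assms by simp
  moreover have "1/(real m+1)^2 \<le> 1/(real k+1)^2"
    using km assms by (intro divide_left_mono power_mono) auto
  moreover have "1/real m \<le> 1/real k" using km assms by (intro divide_left_mono) auto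
  ultimately show ?thesis by linarith
qed

lemma S0_iso: assumes m: "m \<ge> 1" shows "openin (subtopology euclideanreal S0) {1/real m}"
proof -
  define d where "d = 1/(real m + 1)^2"
  have d0: "d > 0" unfolding d_def by simp
  have "{1/real m} = ball (1/real m) d \<inter> S0"
  proof
    show "{1/real m} \<subseteq> ball (1/real m) d \<inter> S0" using d0 m unfolding S0_def by auto
    show "ball (1/real m) d \<inter> S0 \<subseteq> {1/real m}"
    proof
      fix y assume y: "y \<in> ball (1/real m) d \<inter> S0"
      hence dy: "\<bar>1/real m - y\<bar> < d" by (simp add: dist_real_def)
      from y consider "y = 0" | k where "k \<ge> 1" "y = 1/real k" unfolding S0_def by blast
      thus "y \<in> {1/real m}"
      proof cases
        case 1
        have "0 \<le> real m * real m" by simp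
        hence "real m \<le> (real m + 1)^2" by (simp add: power2_eq_square algebra_simps)
        hence "d \<le> 1/real m" unfolding d_def using m
          by (intro divide_left_mono) auto
        thus ?thesis using dy 1 by simp
      next
        case 2
        show ?thesis
        proof (cases "k = m")
          case False
          thus ?thesis using gap[OF 2(1) m False] dy 2(2) d_def by simp
        qed (simp add: 2)
      qed
    qed
  qed
  thus ?thesis unfolding openin_subtopology by (metis open_ball open_openin)
qed

lemma topspace_fan_base: "topspace fan_base = {n. n\<ge>1} \<times> S0"
  by (simp add: fan_base_def)

lemma topspace_fan_V: "topspace fan_V = fan_collapse ` topspace fan_base"
proof
  show "topspace fan_V \<subseteq> fan_collapse ` topspace fan_base"
    using openin_topspace[of fan_V] unfolding fan_V_def openin_quotient_topology by blast
  have "{x \<in> topspace fan_base. fan_collapse x \<in> fan_collapse ` topspace fan_base} = topspace fan_base"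
    by auto
  hence "openin fan_V (fan_collapse ` topspace fan_base)"
    unfolding fan_V_def openin_quotient_topology by simp
  thus "fan_collapse ` topspace fan_base \<subseteq> topspace fan_V" by (rule openin_subset)
qed

lemma fan_pt: "n \<ge> 1 \<Longrightarrow> m \<ge> 1 \<Longrightarrow> (n, 1/real m) \<in> topspace fan_V"
proof -
  assume "n \<ge> 1" "m \<ge> 1"
  hence "(n, 1/real m) \<in> topspace fan_base" unfolding topspace_fan_base S0_def by auto
  moreover have "fan_collapse (n, 1/real m) = (n, 1/real m)" using \<open>m\<ge>1\<close> by (simp add: fan_collapse_def)
  ultimately show ?thesis unfolding topspace_fan_V by (metis image_eqI)
qed

lemma fan_vertex: "(0,0) \<in> topspace fan_V"
proof -
  have "(1, 0) \<in> topspace fan_base" unfolding topspace_fan_base S0_def by auto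
  moreover have "fan_collapse (1, 0) = (0, 0)" by (simp add: fan_collapse_def)
  ultimately show ?thesis unfolding topspace_fan_V by (metis image_eqI)
qed

lemma fan_sing_open: assumes n: "n \<ge> 1" and m: "m \<ge> 1" shows "openin fan_V {(n, 1/real m)}"
proof -
  have pt: "(n, 1/real m) \<in> topspace fan_base" using n m unfolding topspace_fan_base S0_def by auto
  have fc: "fan_collapse (n, 1/real m) = (n, 1/real m)" using m by (simp add: fan_collapse_def)
  have pre: "{x \<in> topspace fan_base. fan_collapse x \<in> {(n, 1/real m)}} = {n} \<times> {1/real m}"
    using n m pt unfolding topspace_fan_base by (auto simp: fan_collapse_def split: if_splits)
  have "openin fan_base ({n} \<times> {1/real m})"
    unfolding fan_base_def openin_prod_Times_iff using n S0_iso[OF m] by simp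
  thus ?thesis unfolding fan_V_def openin_quotient_topology pre using pt fc
    by (metis empty_subsetI image_eqI insert_subset)
qed




lemma fan_closed:
  assumes Fs: "F \<subseteq> topspace fan_V" and F0: "(0,0) \<notin> F"
    and fin: "\<And>a. finite {y. (a,y) \<in> F}"
  shows "closedin fan_V F"
proof -
  define P where "P = topspace fan_base - F"
  have "openin fan_base P"
    unfolding fan_base_def openin_prod_topology_alt
  proof (intro allI impI)
    fix a s assume as: "(a,s) \<in> P"
    hence as: "(a,s) \<in> topspace fan_base - F" using P_def by simp
    define G where "G = {y. (a,y) \<in> F}"
    have "closed G" using fin G_def finite_imp_closed by blast
    hence "openin (subtopology euclideanreal S0) (S0 - G)"
      unfolding openin_subtopology by (metis Diff_eq inf_commute open_Compl open_openin)
    moreover have "openin (discrete_topology {n. n\<ge>1}) {a}" using as by (simp add: topspace_fan_base)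
    moreover have "{a} \<times> (S0 - G) \<subseteq> topspace fan_base - F" using as G_def by (auto simp: topspace_fan_base)
    moreover have "s \<in> S0 - G" using as G_def by (auto simp: topspace_fan_base)
    ultimately show "\<exists>U V. openin (discrete_topology {n. n\<ge>1}) U \<and> openin (subtopology euclideanreal S0) V \<and>
          a \<in> U \<and> s \<in> V \<and> U \<times> V \<subseteq> P"
      unfolding P_def by blast
  qed
  moreover have "{x \<in> topspace fan_base. fan_collapse x \<in> topspace fan_V - F} = topspace fan_base - F"
  proof (rule Set.set_eqI)
    fix x
    show "x \<in> {x \<in> topspace fan_base. fan_collapse x \<in> topspace fan_V - F} \<longleftrightarrow> x \<in> topspace fan_base - F"
    proof (cases "snd x = 0")
      case True
      have "x \<notin> F"
      proof
        assume "x \<in> F"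
        hence "x \<in> fan_collapse ` topspace fan_base" using Fs topspace_fan_V by blast
        then obtain z where z: "z \<in> topspace fan_base" "x = fan_collapse z" by blast
        hence "x = (0,0) \<or> x = z" by (simp add: fan_collapse_def)
        moreover have "x \<noteq> z \<or> fst z \<ge> 1" using z(1) by (auto simp: topspace_fan_base)
        ultimately have "x = (0,0)" using True z by (cases "snd z = 0") (auto simp: fan_collapse_def)
        thus False using F0 \<open>x \<in> F\<close> by simp
      qed
      thus ?thesis using True F0 topspace_fan_V by (auto simp: fan_collapse_def)
    next
      case False
      hence "fan_collapse x = x" by (simp add: fan_collapse_def)
      thus ?thesis using topspace_fan_V by (auto, metis image_eqI)
    qed
  qed
  ultimately have "openin fan_base {x \<in> topspace fan_base. fan_collapse x \<in> topspace fan_V - F}"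
    using P_def by simp
  hence "openin fan_V (topspace fan_V - F)"
    unfolding fan_V_def openin_quotient_topology using topspace_fan_V[unfolded fan_V_def] by simp
  thus ?thesis using Fs closedin_def by blast
qed




lemma V_props:
  assumes e: "homeomorphic_map fan_V (subtopology T K2) e" and cl: "closedin T K2"
  shows "e (0,0) \<in> K2" "\<And>n m. n\<ge>1 \<Longrightarrow> m\<ge>1 \<Longrightarrow> e (n, 1/real m) \<in> K2"
    "\<And>W n. openin T W \<Longrightarrow> e (0,0) \<in> W \<Longrightarrow> n\<ge>1 \<Longrightarrow> \<exists>M. \<forall>m\<ge>M. e (n, 1/real m) \<in> W"
    "\<And>C. compactin T C \<Longrightarrow> finite {n. n\<ge>1 \<and> (\<exists>m\<ge>1. e (n, 1/real m) \<in> C)}"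
proof -
  have sur: "e ` topspace fan_V = topspace T \<inter> K2"
    using homeomorphic_imp_surjective_map[OF e] by simp
  show "e (0,0) \<in> K2" using sur fan_vertex by blast
  show "\<And>n m. n\<ge>1 \<Longrightarrow> m\<ge>1 \<Longrightarrow> e (n, 1/real m) \<in> K2" using sur fan_pt by blast
  have cont: "continuous_map fan_V T e"
    using homeomorphic_imp_continuous_map[OF e] continuous_map_in_subtopology by blast
  show "\<exists>M. \<forall>m\<ge>M. e (n, 1/real m) \<in> W" if W: "openin T W" "e (0,0) \<in> W" and n: "n \<ge> 1" for W n
  proof -
    define U where "U = {x \<in> topspace fan_V. e x \<in> W}"
    have "openin fan_V U" unfolding U_def using cont W(1) by (rule openin_continuous_map_preimage)
    hence "openin fan_base {x \<in> topspace fan_base. fan_collapse x \<in> U}"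
      unfolding fan_V_def openin_quotient_topology by blast
    moreover have "(n, 0) \<in> {x \<in> topspace fan_base. fan_collapse x \<in> U}"
      using n W fan_vertex U_def by (simp add: topspace_fan_base S0_def fan_collapse_def)
    ultimately obtain U1 V1 where UV: "openin (discrete_topology {n. n\<ge>1}) U1"
        "openin (subtopology euclideanreal S0) V1" "n \<in> U1" "0 \<in> V1"
        "U1 \<times> V1 \<subseteq> {x \<in> topspace fan_base. fan_collapse x \<in> U}"
      unfolding fan_base_def openin_prod_topology_alt by meson
    obtain Op where Op: "open Op" "V1 = Op \<inter> S0" using UV(2) by (auto simp: openin_subtopology)
    have "0 \<in> Op" using Op UV(4) by blast
    then obtain eps where eps: "eps > 0" "ball 0 eps \<subseteq> Op" using Op(1) open_contains_ball by blast
    obtain M0::nat where M0: "1 / eps < real M0" using reals_Archimedean2 by blast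
    define M where "M = max M0 1"
    have "e (n, 1/real m) \<in> W" if m: "m \<ge> M" for m
    proof -
      have m1: "real m \<ge> 1" "1/eps < real m" using m M0 M_def by auto
      hence "1/real m < eps" using eps(1) by (simp add: field_simps)
      moreover have "1/real m > 0" using m1 by simp
      ultimately have "1/real m \<in> ball 0 eps" by (simp add: dist_real_def)
      moreover have "1/real m \<in> S0" using m1 unfolding S0_def by auto
      ultimately have "1/real m \<in> V1" using Op eps by blast
      hence "(n, 1/real m) \<in> U1 \<times> V1" using UV(3) by simp
      hence "fan_collapse (n, 1/real m) \<in> U" using UV(5) by blast
      moreover have "fan_collapse (n, 1/real m) = (n, 1/real m)" using m1 by (simp add: fan_collapse_def)
      ultimately show ?thesis unfolding U_def by simp
    qed
    thus ?thesis by blast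
  qed
  show "finite {n. n\<ge>1 \<and> (\<exists>m\<ge>1. e (n, 1/real m) \<in> C)}" if C: "compactin T C" for C
  proof (rule ccontr)
    define Ninf where "Ninf = {n. n\<ge>1 \<and> (\<exists>m\<ge>1. e (n, 1/real m) \<in> C)}"
    assume "infinite {n. n\<ge>1 \<and> (\<exists>m\<ge>1. e (n, 1/real m) \<in> C)}"
    hence inf: "infinite Ninf" unfolding Ninf_def .
    have "\<forall>n\<in>Ninf. \<exists>m. n \<ge> 1 \<and> m \<ge> 1 \<and> e (n, 1/real m) \<in> C"
      unfolding Ninf_def by blast
    then obtain g where g: "\<forall>n\<in>Ninf. n \<ge> 1 \<and> g n \<ge> 1 \<and> e (n, 1/real (g n)) \<in> C"
      by (rule bchoice[elim_format]) blast
    have "compactin T (K2 \<inter> C)" using closed_Int_compactin cl C by blast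
    hence c2: "compactin (subtopology T K2) (K2 \<inter> C)" by (simp add: compactin_subtopology)
    define Z where "Z = {z \<in> topspace fan_V. e z \<in> C}"
    have "e ` Z = K2 \<inter> C" using sur compactin_subset_topspace[OF C] unfolding Z_def by auto
    hence cZ: "compactin fan_V Z" using homeomorphic_map_compactness[OF e, of Z] c2 Z_def by auto
    define F where "F = (\<lambda>n. (n, 1/real (g n))) ` Ninf"
    have FZ: "F \<subseteq> Z"
    proof
      fix x assume "x \<in> F"
      then obtain n where n: "n \<in> Ninf" "x = (n, 1/real (g n))" unfolding F_def by blast
      thus "x \<in> Z" using g fan_pt[of n "g n"] unfolding Z_def by simp
    qed
    have "closedin fan_V F"
    proof (rule fan_closed)
      show "F \<subseteq> topspace fan_V" using FZ Z_def by auto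
      show "(0,0) \<notin> F" unfolding F_def using g by auto
      fix a have "{y. (a,y) \<in> F} \<subseteq> {1/real (g a)}" unfolding F_def by auto
      thus "finite {y. (a,y) \<in> F}" using finite_subset by blast
    qed
    hence "compactin fan_V F" using closed_compactin cZ FZ by blast
    moreover have "\<And>x. x \<in> F \<Longrightarrow> openin fan_V {x}" unfolding F_def using g fan_sing_open by auto
    ultimately have "finite F" by (rule cpt_disc_finite)
    moreover have "inj_on (\<lambda>n. (n, 1/real (g n))) Ninf" by (simp add: inj_on_def)
    ultimately show False using inf F_def finite_image_iff by blast
  qed
qed




lemma main_contra:
  fixes T :: "'g topology" and X :: "'a topology" and mu :: "'g \<Rightarrow> 'g \<Rightarrow> 'g"
  assumes t1X: "t1_space X" and kX: "k_space X"
    and CK: "\<exists>C. closedin X C \<and> subtopology X C homeomorphic_space K_space"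
    and CV: "\<exists>C. closedin X C \<and> subtopology X C homeomorphic_space fan_V"
    and hX: "X homeomorphic_space subtopology T A" and clA: "closedin T A"
    and mu: "continuous_map (prod_topology T T) T (\<lambda>p. mu (fst p) (snd p))"
    and muA: "\<And>x y. x\<in>A \<Longrightarrow> y\<in>A \<Longrightarrow> mu x y \<in> A"
    and L: "continuous_map (prod_topology T T) T L"
    and R: "continuous_map (prod_topology T T) T R"
    and LR: "\<And>x y. x \<in> A \<Longrightarrow> y \<in> A \<Longrightarrow> L (mu x y, y) = x \<and> R (x, mu x y) = y"
  shows False
proof -
  obtain eK K2 where eK: "homeomorphic_map K_space (subtopology T K2) eK" "closedin T K2" "K2 \<subseteq> A"
    using CK embed[OF hX clA] by blast
  obtain eV V2 where eV: "homeomorphic_map fan_V (subtopology T V2) eV" "closedin T V2" "V2 \<subseteq> A"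
    using CV embed[OF hX clA] by blast
  note KP = K_props[OF eK(1,2)]
  note VP = V_props[OF eV(1,2)]
  have t1: "t1_space (subtopology T A)" using homeomorphic_t1_space[OF hX] t1X by simp
  have kY: "k_space (subtopology T A)" using homeomorphic_k_space[OF hX] kX by simp
  have Atop: "A \<subseteq> topspace T" using clA closedin_subset by blast
  show False
  proof (rule core[OF kY t1 Atop mu muA L R LR,
        where a = "eK (0,0)" and k = "\<lambda>n m. eK (1/real n, 1/(real n * real m))"
          and b = "eV (0,0)" and v = "\<lambda>n m. eV (n, 1/real m)"])
    show "eK (0,0) \<in> A" using KP(1) eK(3) by blast
    show "\<And>n m. n\<ge>1 \<Longrightarrow> m\<ge>1 \<Longrightarrow> eK (1/real n, 1/(real n * real m)) \<in> A" using KP(2) eK(3) by blast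
    show "eV (0,0) \<in> A" using VP(1) eV(3) by blast
    show "\<And>n m. n\<ge>1 \<Longrightarrow> m\<ge>1 \<Longrightarrow> eV (n, 1/real m) \<in> A" using VP(2) eV(3) by blast
  qed (use KP(3,4) VP(3,4) in auto)
qed

lemma lin_cont:
  fixes T :: "'v::real_vector topology"
  assumes "linear_topological_space T"
  shows "continuous_map (prod_topology T T) T (\<lambda>q. a *\<^sub>R fst q + b *\<^sub>R snd q)"
proof -
  have add: "continuous_map (prod_topology T T) T (\<lambda>p. fst p + snd p)"
    and sm: "continuous_map (prod_topology euclideanreal T) T (\<lambda>p. fst p *\<^sub>R snd p)"
    using assms unfolding linear_topological_space_def by auto
  have h1: "continuous_map (prod_topology T T) T (\<lambda>q. a *\<^sub>R fst q)"
    using continuous_map_compose[OF continuous_map_pairedI[OF continuous_map_const[THEN iffD2] continuous_map_fst] sm]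
    by (simp add: o_def)
  have h2: "continuous_map (prod_topology T T) T (\<lambda>q. b *\<^sub>R snd q)"
    using continuous_map_compose[OF continuous_map_pairedI[OF continuous_map_const[THEN iffD2] continuous_map_snd] sm]
    by (simp add: o_def)
  show ?thesis
    using continuous_map_compose[OF continuous_map_pairedI[OF h1 h2] add] by (simp add: o_def)
qed

theorem theorem1:
  fixes X :: "'a topology"
  assumes "normal_space X" and "t1_space X" and "k_space X"
    and "\<exists>C. closedin X C \<and> subtopology X C homeomorphic_space K_space"
    and "\<exists>C. closedin X C \<and> subtopology X C homeomorphic_space fan_V"
  shows "(\<forall>(G :: ('g, 'm) monoid_scheme) (T :: 'g topology). topological_group G T \<longrightarrow>
            \<not> (\<exists>A. closedin T A \<and> multiplicative G A \<and> X homeomorphic_space subtopology T A))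
       \<and> (\<forall>T :: 'v::real_vector topology. linear_topological_space T \<longrightarrow>
            \<not> (\<exists>A. closedin T A \<and> convex A \<and> X homeomorphic_space subtopology T A))"
proof (intro conjI allI impI notI)
  fix G :: "('g, 'm) monoid_scheme" and T :: "'g topology"
  assume tg: "topological_group G T" and "\<exists>A. closedin T A \<and> multiplicative G A \<and> X homeomorphic_space subtopology T A"
  then obtain A where A: "closedin T A" "multiplicative G A" "X homeomorphic_space subtopology T A" by blast
  have grp: "group G" and top: "topspace T = carrier G"
    and mc: "continuous_map (prod_topology T T) T (\<lambda>p. fst p \<otimes>\<^bsub>G\<^esub> snd p)"
    and ic: "continuous_map T T (\<lambda>x. inv\<^bsub>G\<^esub> x)"
    using tg unfolding topological_group_def by auto
  have AG: "A \<subseteq> carrier G" using A(2) unfolding multiplicative_def by blast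
  have L: "continuous_map (prod_topology T T) T (\<lambda>q. fst q \<otimes>\<^bsub>G\<^esub> inv\<^bsub>G\<^esub> (snd q))"
    using continuous_map_compose[OF continuous_map_pairedI[OF continuous_map_fst
          continuous_map_compose[OF continuous_map_snd ic]] mc] by (simp add: o_def)
  have R: "continuous_map (prod_topology T T) T (\<lambda>q. inv\<^bsub>G\<^esub> (fst q) \<otimes>\<^bsub>G\<^esub> snd q)"
    using continuous_map_compose[OF continuous_map_pairedI[OF
          continuous_map_compose[OF continuous_map_fst ic] continuous_map_snd] mc] by (simp add: o_def)
  show False
  proof (rule main_contra[OF assms(2-5) A(3) A(1), where mu = "\<lambda>x y. x \<otimes>\<^bsub>G\<^esub> y", OF mc _ L R])
    show "\<And>x y. x \<in> A \<Longrightarrow> y \<in> A \<Longrightarrow> x \<otimes>\<^bsub>G\<^esub> y \<in> A" using A(2) unfolding multiplicative_def by blast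
    fix x y assume xy: "x \<in> A" "y \<in> A"
    hence xyG: "x \<in> carrier G" "y \<in> carrier G" using AG by auto
    interpret group G by (rule grp)
    show "(fst (x \<otimes>\<^bsub>G\<^esub> y, y) \<otimes>\<^bsub>G\<^esub> inv\<^bsub>G\<^esub> snd (x \<otimes>\<^bsub>G\<^esub> y, y)) = x \<and> (inv\<^bsub>G\<^esub> fst (x, x \<otimes>\<^bsub>G\<^esub> y) \<otimes>\<^bsub>G\<^esub> snd (x, x \<otimes>\<^bsub>G\<^esub> y)) = y"
      using xyG by (simp add: m_assoc[symmetric] m_assoc r_inv l_inv)
  qed
next
  fix T :: "'v::real_vector topology"
  assume lt: "linear_topological_space T" and "\<exists>A. closedin T A \<and> convex A \<and> X homeomorphic_space subtopology T A"
  then obtain A where A: "closedin T A" "convex A" "X homeomorphic_space subtopology T A" by blast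
  show False
  proof (rule main_contra[OF assms(2-5) A(3) A(1), where mu = "\<lambda>x y. (1/2) *\<^sub>R x + (1/2) *\<^sub>R y",
        OF _ _ lin_cont[OF lt, of 2 "-1"] lin_cont[OF lt, of "-1" 2]])
    show "continuous_map (prod_topology T T) T (\<lambda>p. (1/2) *\<^sub>R fst p + (1/2) *\<^sub>R snd p)"
      by (rule lin_cont[OF lt])
    show "\<And>x y. x \<in> A \<Longrightarrow> y \<in> A \<Longrightarrow> (1/2) *\<^sub>R x + (1/2) *\<^sub>R y \<in> A"
      using A(2) by (intro convexD) auto
    fix x y :: 'v
    show "2 *\<^sub>R fst ((1/2) *\<^sub>R x + (1/2) *\<^sub>R y, y) + (-1) *\<^sub>R snd ((1/2) *\<^sub>R x + (1/2) *\<^sub>R y, y) = x \<and>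
          (-1) *\<^sub>R fst (x, (1/2) *\<^sub>R x + (1/2) *\<^sub>R y) + 2 *\<^sub>R snd (x, (1/2) *\<^sub>R x + (1/2) *\<^sub>R y) = y"
      by (simp add: scaleR_add_right)
  qed
qed


end
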